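(* Let $n \le \ell$ and $m$ be positive integers, and consider the controlled ODE (continuous-time recurrent neural network) $$\dot x = -\frac{1}{\tau} x + W\sigma_{\ell}(Ax + Bu + \mu) + \nu,$$ with state $x\in\mathbb{R}^n$, input $u\in\mathbb{R}^m$, scalar $\tau>0$, and parameters $W\in\mathbb{R}^{n\times\ell}$, $A\in\mathbb{R}^{\ell\times n}$, $B\in\mathbb{R}^{\ell\times m}$, $\mu\in\mathbb{R}^\ell$, $\nu\in\mathbb{R}^n$. Here $\sigma_\ell(w)=(\sigma(w_1),\dots,\sigma(w_\ell))^\top$, where $\sigma:\mathbb{R}\to\mathbb{R}$ is strictly increasing, continuous, subdifferentiable, satisfies $\sigma(0)=0$ and the slope condition $0\le \frac{\sigma(r)-\sigma(r')}{r-r'}\le 1$ for all $r\neq r'$. Suppose $\mathrm{rank}(A)=n$ and there exists a diagonal matrix $\Omega=\mathrm{diag}(\omega_1,\dots,\omega_\ell)$ with all $\omega_i>0$ such that $$\Omega\Big(AW-\frac{1}{\tau}I\Big)+\Big(W^\top A^\top-\frac{1}{\tau}I\Big)\Omega \prec 0.$$ Then the system is input-to-state stable (ISS).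
   Context: The system is assumed (after a translation of coordinates) to have its equilibrium for zero input at the origin. The system $\dot x=f(x,u)$ is ISS if there exist a class $\mathcal{KL}$ function $\beta$ and a class $\mathcal{K}_\infty$ function $\gamma$ such that for every bounded input $u:[0,\infty)\to\mathbb{R}^m$ and every initial condition $x(0)=x_0$, the solution satisfies $\|x(t)\|\le \beta(\|x_0\|,t)+\gamma(\|u\|_\infty)$ for all $t\ge 0$. $M\prec 0$ means $M$ is symmetric negative definite. *)

theory Defs
  imports "HOL-Analysis.Analysis"
begin

text \<open>Comparison functions (Khalil's conventions), on the domain [0,\<infinity>).\<close>

definition class_K :: "(real \<Rightarrow> real) \<Rightarrow> bool" where
  "class_K \<gamma> \<longleftrightarrow> continuous_on {0..} \<gamma> \<and> \<gamma> 0 = 0 \<and> strict_mono_on {0..} \<gamma>"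

definition class_K_inf :: "(real \<Rightarrow> real) \<Rightarrow> bool" where
  "class_K_inf \<gamma> \<longleftrightarrow> class_K \<gamma> \<and> filterlim \<gamma> at_top at_top"

definition class_KL :: "(real \<Rightarrow> real \<Rightarrow> real) \<Rightarrow> bool" where
  "class_KL \<beta> \<longleftrightarrow>
     (\<forall>t\<ge>0. class_K (\<lambda>r. \<beta> r t)) \<and>
     (\<forall>r\<ge>0. antimono_on {0..} (\<lambda>t. \<beta> r t) \<and> ((\<lambda>t. \<beta> r t) \<longlongrightarrow> 0) at_top)"

text \<open>Input-to-state stability of \<open>x' = f x u\<close> with respect to an equilibrium for zero input.
  Inputs: Lebesgue measurable, bounded on [0,\<infinity>); solutions in the Caratheodory sense
  (continuous and satisfying the integral equation).  The norm of the input is the sup norm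
  on [0,\<infinity>).\<close>

definition ISS :: "(real^'n \<Rightarrow> real^'m \<Rightarrow> real^'n) \<Rightarrow> bool" where
  "ISS f \<longleftrightarrow> (\<exists>xe. f xe 0 = 0 \<and> (\<exists>\<beta> \<gamma>. class_KL \<beta> \<and> class_K_inf \<gamma> \<and>
     (\<forall>(u::real \<Rightarrow> real^'m) (x::real \<Rightarrow> real^'n).
        u measurable_on {0..} \<and> bounded (u ` {0..}) \<and>
        continuous_on {0..} x \<and>
        (\<forall>t\<ge>0. ((\<lambda>s. f (x s) (u s)) has_integral (x t - x 0)) {0..t})
        \<longrightarrow> (\<forall>t\<ge>0. norm (x t - xe) \<le> \<beta> (norm (x 0 - xe)) t + \<gamma> (Sup ((\<lambda>s. norm (u s)) ` {0..}))))))"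

definition neg_definite :: "real^'k^'k \<Rightarrow> bool" where
  "neg_definite M \<longleftrightarrow> transpose M = M \<and> (\<forall>z. z \<noteq> 0 \<longrightarrow> z \<bullet> (M *v z) < 0)"

definition diag_mat :: "real^'k \<Rightarrow> real^'k^'k" where
  "diag_mat w = (\<chi> i j. if i = j then w $ i else 0)"

definition sigma_vec :: "(real \<Rightarrow> real) \<Rightarrow> real^'l \<Rightarrow> real^'l" where
  "sigma_vec \<sigma> w = (\<chi> i. \<sigma> (w $ i))"

definition crnn :: "real \<Rightarrow> real^'l^'n \<Rightarrow> real^'n^'l \<Rightarrow> real^'m^'l \<Rightarrow> real^'l \<Rightarrow> real^'n
                    \<Rightarrow> (real \<Rightarrow> real) \<Rightarrow> real^'n \<Rightarrow> real^'m \<Rightarrow> real^'n" where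
  "crnn \<tau> W A B \<mu> \<nu> \<sigma> x u = - (1/\<tau>) *\<^sub>R x + W *v sigma_vec \<sigma> (A *v x + B *v u + \<mu>) + \<nu>"

end

theory Submission
  imports Defs
begin

lemma antideriv_exists:
  fixes f :: "real \<Rightarrow> real"
  assumes cf: "continuous_on UNIV f"
  shows "\<exists>F. F 0 = 0 \<and> (\<forall>r. (F has_real_derivative f r) (at r))"
proof -
  define F where "F r = integral {0..r} f - integral {r..0} f" for r
  have key: "F r = integral {-N..r} f - integral {-N..0} f" if "r \<in> {-N..N}" for r N :: real
  proof (cases "0 \<le> r")
    case True
    have i: "f integrable_on {-N..r}" using cf integrable_continuous_real continuous_on_subset by blast
    have "integral {-N..0} f + integral {0..r} f = integral {-N..r} f"
      using Henstock_Kurzweil_Integration.integral_combine[OF _ True i] that True by auto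
    moreover have "integral {r..0} f = 0"
      using True by (cases "r = 0") auto
    ultimately show ?thesis unfolding F_def by linarith
  next
    case False
    have i: "f integrable_on {-N..0}" using cf integrable_continuous_real continuous_on_subset by blast
    have "integral {-N..r} f + integral {r..0} f = integral {-N..0} f"
      using Henstock_Kurzweil_Integration.integral_combine[OF _ _ i, of r] that False by auto
    moreover have "integral {0..r} f = 0"
      using False by auto
    ultimately show ?thesis unfolding F_def by linarith
  qed
  have "(F has_real_derivative f r) (at r)" for r
  proof -
    define N where "N = \<bar>r\<bar> + 1"
    have rin: "r \<in> {-N<..<N}" unfolding N_def by auto
    have d: "((\<lambda>x. integral {-N..x} f - integral {-N..0} f) has_real_derivative f r) (at r within {-N..N})"
      using integral_has_real_derivative[of "-N" N f r] cf rin continuous_on_subset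
      by (auto intro!: derivative_eq_intros)
    have d2: "(F has_real_derivative f r) (at r within {-N..N})"
      using d by (rule has_field_derivative_transform_within[where d=1]) (use rin in \<open>auto simp: key\<close>)
    show ?thesis
      using d2 rin by (simp add: at_within_Icc_at)
  qed
  moreover have "F 0 = 0" unfolding F_def by simp
  ultimately show ?thesis by blast
qed

lemma slope_facts:
  fixes d e :: real
  assumes "d^2 \<le> d * e"
  shows "0 \<le> d * e" "\<bar>d\<bar> \<le> \<bar>e\<bar>"
proof -
  have "0 \<le> d^2" by simp
  then show "0 \<le> d * e" using assms by linarith
  show "\<bar>d\<bar> \<le> \<bar>e\<bar>"
  proof (cases "d = 0")
    case False
    have "\<bar>d\<bar> * \<bar>d\<bar> \<le> \<bar>d\<bar> * \<bar>e\<bar>"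
      using assms by (simp add: power2_eq_square abs_mult[symmetric])
    moreover have "0 < \<bar>d\<bar>" using False by simp
    ultimately show ?thesis using mult_le_cancel_left_pos[of "\<bar>d\<bar>" "\<bar>d\<bar>" "\<bar>e\<bar>"] by linarith
  qed simp
qed

lemma Phi_bounds:
  fixes \<phi> \<Phi> :: "real \<Rightarrow> real"
  assumes der: "\<And>r. (\<Phi> has_real_derivative \<phi> r) (at r)"
    and sl: "\<And>a b. (\<phi> b - \<phi> a)^2 \<le> (\<phi> b - \<phi> a) * (b - a)"
  shows "\<Phi> b - \<Phi> a \<le> \<phi> a * (b - a) + (b - a)^2 / 2"
    and "\<phi> a * (b - a) \<le> \<Phi> b - \<Phi> a"
proof -
  have L: "\<bar>\<phi> y - \<phi> x\<bar> \<le> \<bar>y - x\<bar>" "0 \<le> (\<phi> y - \<phi> x) * (y - x)" for x y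
    using slope_facts[OF sl[of x y]] slope_facts[OF sl[of y x]] by auto
  define g where "g x = \<Phi> x - \<phi> a * x - (x - a)^2 / 2" for x
  have dg: "(g has_real_derivative (\<phi> x - \<phi> a - (x - a))) (at x)" for x
    unfolding g_def by (auto intro!: derivative_eq_intros der simp: field_simps)
  define h where "h x = \<Phi> x - \<phi> a * x" for x
  have dh: "(h has_real_derivative (\<phi> x - \<phi> a)) (at x)" for x
    unfolding h_def by (auto intro!: derivative_eq_intros der)
  have "g b \<le> g a"
  proof (cases "a \<le> b")
    case True
    show ?thesis
    proof (rule DERIV_nonpos_imp_nonincreasing[of a b g, OF True])
      fix x assume "a \<le> x" "x \<le> b"
      then have "\<phi> x - \<phi> a - (x - a) \<le> 0" using L(1)[of a x] by auto
      then show "\<exists>y. DERIV g x :> y \<and> y \<le> 0" using dg by blast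
    qed
  next
    case False
    show ?thesis
    proof (rule DERIV_nonneg_imp_nondecreasing[of b a g])
      show "b \<le> a" using False by simp
      fix x assume "b \<le> x" "x \<le> a"
      then have "0 \<le> \<phi> x - \<phi> a - (x - a)" using L(1)[of x a] by auto
      then show "\<exists>y. DERIV g x :> y \<and> 0 \<le> y" using dg by blast
    qed
  qed
  then show "\<Phi> b - \<Phi> a \<le> \<phi> a * (b - a) + (b - a)^2 / 2"
    unfolding g_def by (simp add: algebra_simps)
  have "h a \<le> h b"
  proof (cases "a \<le> b")
    case True
    show ?thesis
    proof (rule DERIV_nonneg_imp_nondecreasing[of a b h, OF True])
      fix x assume "a \<le> x" "x \<le> b"
      then have "0 \<le> \<phi> x - \<phi> a" using L(2)[of a x]
        by (cases "x = a") (auto simp: zero_le_mult_iff)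
      then show "\<exists>y. DERIV h x :> y \<and> 0 \<le> y" using dh by blast
    qed
  next
    case False
    show ?thesis
    proof (rule DERIV_nonpos_imp_nonincreasing[of b a h])
      show "b \<le> a" using False by simp
      fix x assume "b \<le> x" "x \<le> a"
      then have "\<phi> x - \<phi> a \<le> 0" using L(2)[of a x]
        by (cases "x = a") (auto simp: zero_le_mult_iff)
      then show "\<exists>y. DERIV h x :> y \<and> y \<le> 0" using dh by blast
    qed
  qed
  then show "\<phi> a * (b - a) \<le> \<Phi> b - \<Phi> a"
    unfolding h_def by (simp add: algebra_simps)
qed



locale crnn_ctx =
  fixes \<tau> :: real and W :: "real^'l^'n" and A :: "real^'n^'l" and B :: "real^'m^'l"
    and \<mu> :: "real^'l" and \<nu> :: "real^'n" and \<sigma> :: "real \<Rightarrow> real" and \<omega> :: "real^'l"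
  assumes tau: "\<tau> > 0"
    and sig_cont: "continuous_on UNIV \<sigma>"
    and sig0: "\<sigma> 0 = 0"
    and slope: "\<And>r r'. r \<noteq> r' \<Longrightarrow> 0 \<le> (\<sigma> r - \<sigma> r') / (r - r') \<and> (\<sigma> r - \<sigma> r') / (r - r') \<le> 1"
    and rk: "rank A = CARD('n)"
    and om: "\<And>i. \<omega> $ i > 0"
    and nd: "neg_definite (diag_mat \<omega> ** (A ** W - (1/\<tau>) *\<^sub>R mat 1)
                      + (transpose W ** transpose A - (1/\<tau>) *\<^sub>R mat 1) ** diag_mat \<omega>)"
begin

definition "T = A ** W"
definition "Om = diag_mat \<omega>"
definition "Mq = diag_mat \<omega> ** (A ** W - (1/\<tau>) *\<^sub>R mat 1)
                      + (transpose W ** transpose A - (1/\<tau>) *\<^sub>R mat 1) ** diag_mat \<omega>"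

lemma sig_slope: "(\<sigma> b - \<sigma> a)^2 \<le> (\<sigma> b - \<sigma> a) * (b - a)"
proof (cases "a = b")
  case False
  define s where "s = (\<sigma> b - \<sigma> a) / (b - a)"
  have s01: "0 \<le> s" "s \<le> 1" using slope[of b a] False unfolding s_def by auto
  have e: "\<sigma> b - \<sigma> a = s * (b - a)" using False unfolding s_def by simp
  have "(s * (b - a))^2 \<le> s * (b - a) * (b - a)"
  proof -
    have "(s * (b - a))^2 = s * s * (b - a)^2" by (simp add: power2_eq_square)
    also have "\<dots> \<le> s * 1 * (b - a)^2"
      using s01 by (intro mult_right_mono mult_left_mono) auto
    finally show ?thesis by (simp add: power2_eq_square)
  qed
  then show ?thesis using e by simp
qed simp

lemma Om_mult: "Om *v z = (\<chi> i. \<omega> $ i * z $ i)"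
proof -
  have "(\<Sum>j\<in>UNIV. (if i = j then \<omega> $ i else 0) * z $ j) = \<omega> $ i * z $ i" for i
  proof -
    have "(\<Sum>j\<in>UNIV. (if i = j then \<omega> $ i else 0) * z $ j) = (\<Sum>j\<in>UNIV. if i = j then \<omega> $ i * z $ j else 0)"
      by (rule sum.cong) auto
    also have "\<dots> = \<omega> $ i * z $ i" by simp
    finally show ?thesis .
  qed
  then show ?thesis
    unfolding Om_def diag_mat_def matrix_vector_mult_def by (simp add: vec_eq_iff)
qed

lemma Om_inner: "(Om *v z) \<bullet> y = (\<Sum>i\<in>UNIV. \<omega> $ i * z $ i * y $ i)"
  by (simp add: Om_mult inner_vec_def)

lemma Om_sym: "z \<bullet> (Om *v y) = (Om *v z) \<bullet> y"
  by (simp add: Om_mult inner_vec_def mult.commute mult.left_commute)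

lemma transpose_inner: "z \<bullet> (transpose X *v y) = (X *v z) \<bullet> (y :: real^'k)"
  for X :: "real^'j^'k"
proof -
  have "transpose X *v y = y v* X"
    by (metis transpose_transpose vector_transpose_matrix)
  then show ?thesis by (metis inner_commute dot_lmul_matrix)
qed

lemma Mq_quad: "z \<bullet> (Mq *v z) = 2 * ((Om *v z) \<bullet> (T *v z)) - (2/\<tau>) * ((Om *v z) \<bullet> z)"
proof -
  have tT: "transpose W ** transpose A = transpose T"
    unfolding T_def by (simp add: matrix_transpose_mul)
  have "Mq *v z = Om *v (T *v z) - (1/\<tau>) *\<^sub>R (Om *v z) + (transpose T *v (Om *v z) - (1/\<tau>) *\<^sub>R (Om *v z))"
    unfolding Mq_def tT Om_def[symmetric] T_def[symmetric]
    by (simp only: matrix_vector_mult_add_rdistrib matrix_vector_mul_assoc[symmetric]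
        matrix_vector_mult_diff_rdistrib matrix_vector_mult_diff_distrib
        scaleR_matrix_vector_assoc[symmetric] matrix_vector_mult_scaleR matrix_vector_mul_lid)
  then have "z \<bullet> (Mq *v z) = z \<bullet> (Om *v (T *v z)) - (1/\<tau>) * (z \<bullet> (Om *v z))
      + (z \<bullet> (transpose T *v (Om *v z)) - (1/\<tau>) * (z \<bullet> (Om *v z)))"
    by (simp only: inner_add_right inner_diff_right inner_scaleR_right)
  also have "\<dots> = 2 * ((Om *v z) \<bullet> (T *v z)) - (2/\<tau>) * ((Om *v z) \<bullet> z)"
  proof -
    have 1: "z \<bullet> (Om *v (T *v z)) = (Om *v z) \<bullet> (T *v z)" by (rule Om_sym)
    have 2: "z \<bullet> (transpose T *v (Om *v z)) = (T *v z) \<bullet> (Om *v z)" by (rule transpose_inner)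
    have 3: "(T *v z) \<bullet> (Om *v z) = (Om *v z) \<bullet> (T *v z)" by (rule inner_commute)
    have 4: "z \<bullet> (Om *v z) = (Om *v z) \<bullet> z" by (rule Om_sym)
    have e: "(2/\<tau>) * ((Om *v z) \<bullet> z) = 2 * ((1/\<tau>) * ((Om *v z) \<bullet> z))" by simp
    show ?thesis unfolding 1 2 3 4 e by linarith
  qed
  finally show ?thesis .
qed

lemma lam_exists: "\<exists>l>0. \<forall>z. z \<bullet> (Mq *v z) \<le> - l * (norm z)^2"
proof -
  have nd': "\<And>z. z \<noteq> 0 \<Longrightarrow> z \<bullet> (Mq *v z) < 0"
    using nd unfolding neg_definite_def Mq_def by blast
  let ?S = "sphere (0::real^'l) 1"
  have ne: "?S \<noteq> {}"
  proof -
    have "norm (axis undefined (1::real) :: real^'l) = 1" by simp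
    then show ?thesis unfolding sphere_def
      by (metis (mono_tags) dist_0_norm mem_Collect_eq empty_iff)
  qed
  have cq: "continuous_on ?S (\<lambda>z. z \<bullet> (Mq *v z))"
    by (intro continuous_intros)
  obtain z0 where z0: "z0 \<in> ?S" "\<And>y. y \<in> ?S \<Longrightarrow> y \<bullet> (Mq *v y) \<le> z0 \<bullet> (Mq *v z0)"
    using continuous_attains_sup[OF compact_sphere ne cq] by blast
  define l where "l = - (z0 \<bullet> (Mq *v z0))"
  have "z0 \<noteq> 0" using z0(1) by auto
  then have lpos: "l > 0" using nd'[of z0] unfolding l_def by simp
  have "z \<bullet> (Mq *v z) \<le> - l * (norm z)^2" for z
  proof (cases "z = 0")
    case False
    define y where "y = (1 / norm z) *\<^sub>R z"
    have "y \<in> ?S" using False unfolding y_def by (simp add: sphere_def)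
    then have "y \<bullet> (Mq *v y) \<le> - l" using z0(2) unfolding l_def by simp
    moreover have "y \<bullet> (Mq *v y) = (z \<bullet> (Mq *v z)) / (norm z)^2"
      unfolding y_def by (simp add: matrix_vector_mult_scaleR power2_eq_square)
    ultimately have "(z \<bullet> (Mq *v z)) / (norm z)^2 \<le> - l" by simp
    then show ?thesis using False by (simp add: divide_le_eq mult.commute)
  qed simp
  then show ?thesis using lpos by blast
qed

end


lemma arith_key:
  fixes a b c X t NT K lam G :: real
  assumes t: "t > 0" and Kl: "K * lam = t * NT^2"
    and X: "X \<le> - (a^2) / t + NT * a * b - K * (lam / 2) * b^2 + G * a * c"
  shows "X \<le> - (a^2) / (4 * t) + t * G^2 * c^2"
proof -
  have e1: "(a - t * NT * b)^2 / (2 * t) = a^2 / (2 * t) - NT * a * b + t * NT^2 * b^2 / 2"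
    using t by (simp add: power2_eq_square field_simps)
  have e2: "(a - 2 * t * G * c)^2 / (4 * t) = a^2 / (4 * t) - G * a * c + t * G^2 * c^2"
    using t by (simp add: power2_eq_square field_simps)
  have p1: "0 \<le> (a - t * NT * b)^2 / (2 * t)" using t by simp
  have p2: "0 \<le> (a - 2 * t * G * c)^2 / (4 * t)" using t by simp
  have k: "K * (lam / 2) * b^2 = t * NT^2 * b^2 / 2" using Kl by simp
  have a1: "a^2 / t = a^2 / (2 * t) + a^2 / (4 * t) + a^2 / (4 * t)"
    using t by (simp add: field_simps)
  show ?thesis using X e1 e2 p1 p2 k a1 by linarith
qed

context crnn_ctx
begin

definition "phiv p z = (\<chi> i. \<sigma> (z $ i + p $ i) - \<sigma> (p $ i))"
definition "Phi p i = (SOME F. F 0 = 0 \<and> (\<forall>r. (F has_real_derivative (\<sigma> (r + p $ i) - \<sigma> (p $ i))) (at r)))"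
definition "lam = (SOME l. l > 0 \<and> (\<forall>z. z \<bullet> (Mq *v z) \<le> - l * (norm z)^2))"
definition "NT = onorm ((*v) T) + 1"
definition "NO = onorm ((*v) Om) + 1"
definition "Ws = (\<Sum>i\<in>UNIV. \<omega> $ i)"
definition "K = \<tau> * NT^2 / lam"
definition "G = 1 + K * NO"
definition "Cq = \<tau> * G^2"
definition "bV = 1/2 + K * Ws / 2"
definition "Lv = (1 + K * Ws) / 2"
definition "LF = 1/\<tau> + NT"
definition "V p z = (norm z)^2 / 2 + K * (\<Sum>i\<in>UNIV. \<omega> $ i * Phi p i (z $ i))"
definition "gradV p z = z + K *\<^sub>R (Om *v phiv p z)"
definition "Fv p z = - (1/\<tau>) *\<^sub>R z + T *v phiv p z"

lemma lam_prop: "lam > 0" "z \<bullet> (Mq *v z) \<le> - lam * (norm z)^2"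
  using someI_ex[OF lam_exists] unfolding lam_def[symmetric] by auto

lemma NT_prop: "NT > 0" "norm (T *v v) \<le> NT * norm v"
proof -
  have bl: "bounded_linear ((*v) T)" by simp
  show "NT > 0" unfolding NT_def using onorm_pos_le[OF bl] by simp
  have "norm (T *v v) \<le> onorm ((*v) T) * norm v" using onorm[OF bl] .
  also have "\<dots> \<le> NT * norm v" unfolding NT_def by (simp add: mult_right_mono)
  finally show "norm (T *v v) \<le> NT * norm v" .
qed

lemma NO_prop: "NO > 0" "norm (Om *v v) \<le> NO * norm v"
proof -
  have bl: "bounded_linear ((*v) Om)" by simp
  show "NO > 0" unfolding NO_def using onorm_pos_le[OF bl] by simp
  have "norm (Om *v v) \<le> onorm ((*v) Om) * norm v" using onorm[OF bl] .
  also have "\<dots> \<le> NO * norm v" unfolding NO_def by (simp add: mult_right_mono)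
  finally show "norm (Om *v v) \<le> NO * norm v" .
qed

lemma Ws_prop: "\<omega> $ i \<le> Ws" "Ws > 0"
proof -
  show "\<omega> $ i \<le> Ws" unfolding Ws_def
    by (rule member_le_sum) (auto intro: less_imp_le om)
  then show "Ws > 0" using om[of i] by linarith
qed

lemma K_pos: "K > 0" and K_lam: "K * lam = \<tau> * NT^2"
  using lam_prop(1) NT_prop(1) tau unfolding K_def by auto

lemma consts_pos: "G > 0" "Cq > 0" "bV > 0" "Lv > 0" "LF > 0"
  using K_pos NO_prop(1) Ws_prop(2) tau NT_prop(1)
  unfolding G_def Cq_def bV_def Lv_def LF_def
  by (auto intro!: add_pos_nonneg add_pos_pos mult_pos_pos zero_less_power simp del: power2_eq_square)

lemma Phi_prop: "Phi p i 0 = 0" "(Phi p i has_real_derivative (\<sigma> (r + p $ i) - \<sigma> (p $ i))) (at r)"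
proof -
  have c: "continuous_on UNIV (\<lambda>r. \<sigma> (r + p $ i) - \<sigma> (p $ i))"
    by (intro continuous_intros continuous_on_compose2[OF sig_cont]) auto
  have "\<exists>F. F 0 = 0 \<and> (\<forall>r. (F has_real_derivative (\<sigma> (r + p $ i) - \<sigma> (p $ i))) (at r))"
    by (rule antideriv_exists[OF c])
  from someI_ex[OF this] show "Phi p i 0 = 0" "(Phi p i has_real_derivative (\<sigma> (r + p $ i) - \<sigma> (p $ i))) (at r)"
    unfolding Phi_def by auto
qed

lemma phi_slope_i: "((\<sigma> (b + c) - \<sigma> c) - (\<sigma> (a + c) - \<sigma> c))^2
   \<le> ((\<sigma> (b + c) - \<sigma> c) - (\<sigma> (a + c) - \<sigma> c)) * (b - a)"
  using sig_slope[where a="a + c" and b="b + c"] by simp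

lemma Phi_ineq:
  "Phi p i b - Phi p i a \<le> (\<sigma> (a + p $ i) - \<sigma> (p $ i)) * (b - a) + (b - a)^2 / 2"
  "(\<sigma> (a + p $ i) - \<sigma> (p $ i)) * (b - a) \<le> Phi p i b - Phi p i a"
  using Phi_bounds[of "Phi p i" "\<lambda>r. \<sigma> (r + p $ i) - \<sigma> (p $ i)", OF Phi_prop(2) phi_slope_i]
  by auto

lemma Phi_range: "0 \<le> Phi p i r" "Phi p i r \<le> r^2 / 2"
  using Phi_ineq[where p=p and i=i and b=r and a=0] Phi_prop(1)[of p i] sig0 by auto

lemma phi_comp: "(phiv p z $ i)^2 \<le> phiv p z $ i * z $ i" "\<bar>phiv p z $ i\<bar> \<le> \<bar>z $ i\<bar>"
proof -
  have "(phiv p z $ i)^2 \<le> phiv p z $ i * z $ i"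
    using phi_slope_i[of "z $ i" "p $ i" 0] sig0 unfolding phiv_def by simp
  then show "(phiv p z $ i)^2 \<le> phiv p z $ i * z $ i" "\<bar>phiv p z $ i\<bar> \<le> \<bar>z $ i\<bar>"
    using slope_facts by auto
qed

lemma phiv_norm: "norm (phiv p z) \<le> norm z"
  by (rule norm_le_componentwise_cart) (use phi_comp in auto)

lemma phiv_lip: "norm (phiv p a - phiv p b) \<le> norm (a - b)"
proof (rule norm_le_componentwise_cart)
  fix i
  have "\<bar>(\<sigma> (a $ i + p $ i) - \<sigma> (p $ i)) - (\<sigma> (b $ i + p $ i) - \<sigma> (p $ i))\<bar> \<le> \<bar>a $ i - b $ i\<bar>"
    using slope_facts(2)[OF phi_slope_i[of "b $ i" "p $ i" "a $ i"]] by simp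
  then show "norm ((phiv p a - phiv p b) $ i) \<le> norm ((a - b) $ i)"
    unfolding phiv_def by simp
qed

lemma phiv_cont: "continuous_on UNIV (phiv p)"
  unfolding phiv_def
  by (intro continuous_on_vec_lambda continuous_intros continuous_on_compose2[OF sig_cont]) auto

lemma key_ineq: "gradV p z \<bullet> (Fv p z + q) \<le> - ((norm z)^2) / (4 * \<tau>) + Cq * (norm q)^2"
proof -
  define f where "f = phiv p z"
  have s1: "(Om *v f) \<bullet> f \<le> (Om *v f) \<bullet> z"
    unfolding Om_inner
  proof (rule sum_mono)
    fix i
    have "f $ i * f $ i \<le> f $ i * z $ i" using phi_comp(1)[of p z i] unfolding f_def by (simp add: power2_eq_square)
    then show "\<omega> $ i * f $ i * f $ i \<le> \<omega> $ i * f $ i * z $ i"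
      using om[of i] by (simp add: mult.assoc mult_left_mono)
  qed
  have s2: "(Om *v f) \<bullet> (T *v f) - (1/\<tau>) * ((Om *v f) \<bullet> f) \<le> - (lam / 2) * (norm f)^2"
    using lam_prop(2)[of f] Mq_quad[of f] by (simp add: field_simps)
  have t1: "(Om *v f) \<bullet> Fv p z \<le> - (lam / 2) * (norm f)^2"
  proof -
    have "(Om *v f) \<bullet> Fv p z = - (1/\<tau>) * ((Om *v f) \<bullet> z) + (Om *v f) \<bullet> (T *v f)"
      unfolding Fv_def f_def by (simp add: inner_add_right inner_diff_right)
    moreover have "(1/\<tau>) * ((Om *v f) \<bullet> f) \<le> (1/\<tau>) * ((Om *v f) \<bullet> z)"
      using s1 tau by (simp add: divide_right_mono)
    ultimately show ?thesis using s2 by linarith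
  qed
  have t2: "z \<bullet> Fv p z \<le> - ((norm z)^2) / \<tau> + NT * norm z * norm f"
  proof -
    have "z \<bullet> Fv p z = - (1/\<tau>) * (z \<bullet> z) + z \<bullet> (T *v f)"
      unfolding Fv_def f_def by (simp add: inner_add_right inner_diff_right)
    moreover have "z \<bullet> (T *v f) \<le> norm z * (NT * norm f)"
      using Cauchy_Schwarz_ineq2[of z "T *v f"] NT_prop(2)[of f]
      by (meson abs_le_D1 mult_left_mono norm_ge_zero order_trans)
    ultimately show ?thesis by (simp add: power2_norm_eq_inner[symmetric] mult.assoc mult.left_commute)
  qed
  have t3: "gradV p z \<bullet> q \<le> G * norm z * norm q"
  proof -
    have "norm (gradV p z) \<le> norm z + K * norm (Om *v f)"
      unfolding gradV_def f_def using norm_triangle_ineq[of z "K *\<^sub>R (Om *v phiv p z)"] K_pos by simp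
    also have "\<dots> \<le> norm z + K * (NO * norm z)"
      using NO_prop(2)[of f] phiv_norm[of p z] K_pos NO_prop(1) unfolding f_def
      by (meson add_left_mono mult_left_mono less_imp_le order_trans)
    finally have "norm (gradV p z) \<le> G * norm z" unfolding G_def by (simp add: algebra_simps)
    then show ?thesis using Cauchy_Schwarz_ineq2[of "gradV p z" q]
      by (meson abs_le_D1 mult_right_mono norm_ge_zero order_trans)
  qed
  have "gradV p z \<bullet> (Fv p z + q) = z \<bullet> Fv p z + K * ((Om *v f) \<bullet> Fv p z) + gradV p z \<bullet> q"
    unfolding gradV_def f_def by (simp add: inner_add_left inner_add_right)
  also have "\<dots> \<le> - ((norm z)^2) / \<tau> + NT * norm z * norm f - K * (lam / 2) * (norm f)^2 + G * norm z * norm q"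
    using t1 t2 t3 K_pos mult_left_mono[OF t1, of K] by linarith
  finally show ?thesis
    using arith_key[OF tau K_lam] unfolding Cq_def by blast
qed

lemma sum_w_sq: "(\<Sum>i\<in>UNIV. \<omega> $ i * (d $ i)^2) \<le> Ws * (norm d)^2"
proof -
  have "(\<Sum>i\<in>UNIV. \<omega> $ i * (d $ i)^2) \<le> (\<Sum>i\<in>UNIV. \<omega> $ i * (norm d)^2)"
  proof (rule sum_mono)
    fix i
    have "(d $ i)^2 \<le> (norm d)^2"
      using component_le_norm_cart[of d i] by (metis abs_ge_zero power2_abs power_mono)
    then show "\<omega> $ i * (d $ i)^2 \<le> \<omega> $ i * (norm d)^2" using om[of i] by (simp add: mult_left_mono)
  qed
  also have "\<dots> = Ws * (norm d)^2" unfolding Ws_def by (simp add: sum_distrib_right)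
  finally show ?thesis .
qed

lemma V_bounds: "(norm z)^2 / 2 \<le> V p z" "V p z \<le> bV * (norm z)^2"
proof -
  have "0 \<le> (\<Sum>i\<in>UNIV. \<omega> $ i * Phi p i (z $ i))"
    using om Phi_range(1) by (intro sum_nonneg mult_nonneg_nonneg) (auto intro: less_imp_le)
  then show "(norm z)^2 / 2 \<le> V p z" unfolding V_def using K_pos by simp
  have "(\<Sum>i\<in>UNIV. \<omega> $ i * Phi p i (z $ i)) \<le> (\<Sum>i\<in>UNIV. \<omega> $ i * (z $ i)^2 / 2)"
    using om Phi_range(2) by (intro sum_mono) (simp add: less_imp_le mult_left_mono)
  also have "\<dots> = (\<Sum>i\<in>UNIV. \<omega> $ i * (z $ i)^2) / 2" by (simp add: sum_divide_distrib)
  also have "\<dots> \<le> Ws * (norm z)^2 / 2" using sum_w_sq[of z] by simp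
  finally have "K * (\<Sum>i\<in>UNIV. \<omega> $ i * Phi p i (z $ i)) \<le> K * (Ws * (norm z)^2 / 2)"
    using K_pos by (simp add: mult_left_mono)
  then show "V p z \<le> bV * (norm z)^2" unfolding V_def bV_def by (simp add: algebra_simps)
qed

lemma norm_add_sq: "(norm (a + d))^2 = (norm a)^2 + 2 * (a \<bullet> d) + (norm d)^2" for a d :: "real^'l"
  by (simp add: power2_norm_eq_inner inner_add_left inner_add_right inner_commute)

lemma V_descent: "V p (a + d) \<le> V p a + gradV p a \<bullet> d + Lv * (norm d)^2"
  and V_convex: "V p a + gradV p a \<bullet> d \<le> V p (a + d)"
proof -
  define f where "f = phiv p a"
  have up: "(\<Sum>i\<in>UNIV. \<omega> $ i * Phi p i ((a + d) $ i)) - (\<Sum>i\<in>UNIV. \<omega> $ i * Phi p i (a $ i))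
      \<le> (Om *v f) \<bullet> d + Ws * (norm d)^2 / 2"
  proof -
    have "(\<Sum>i\<in>UNIV. \<omega> $ i * Phi p i ((a + d) $ i)) - (\<Sum>i\<in>UNIV. \<omega> $ i * Phi p i (a $ i))
        = (\<Sum>i\<in>UNIV. \<omega> $ i * (Phi p i (a $ i + d $ i) - Phi p i (a $ i)))"
      by (simp add: sum_subtractf right_diff_distrib)
    also have "\<dots> \<le> (\<Sum>i\<in>UNIV. \<omega> $ i * (f $ i * d $ i + (d $ i)^2 / 2))"
    proof (rule sum_mono)
      fix i
      have "Phi p i (a $ i + d $ i) - Phi p i (a $ i) \<le> f $ i * d $ i + (d $ i)^2 / 2"
        using Phi_ineq(1)[where p=p and i=i and b="a $ i + d $ i" and a="a $ i"] unfolding f_def phiv_def by simp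
      then show "\<omega> $ i * (Phi p i (a $ i + d $ i) - Phi p i (a $ i)) \<le> \<omega> $ i * (f $ i * d $ i + (d $ i)^2 / 2)"
        using om[of i] by (simp add: mult_left_mono)
    qed
    also have "\<dots> = (Om *v f) \<bullet> d + (\<Sum>i\<in>UNIV. \<omega> $ i * (d $ i)^2) / 2"
      unfolding Om_inner by (simp add: sum.distrib sum_divide_distrib algebra_simps)
    also have "\<dots> \<le> (Om *v f) \<bullet> d + Ws * (norm d)^2 / 2" using sum_w_sq[of d] by simp
    finally show ?thesis .
  qed
  have lo: "(Om *v f) \<bullet> d \<le> (\<Sum>i\<in>UNIV. \<omega> $ i * Phi p i ((a + d) $ i)) - (\<Sum>i\<in>UNIV. \<omega> $ i * Phi p i (a $ i))"
  proof -
    have "(Om *v f) \<bullet> d = (\<Sum>i\<in>UNIV. \<omega> $ i * (f $ i * d $ i))"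
      unfolding Om_inner by (simp add: algebra_simps)
    also have "\<dots> \<le> (\<Sum>i\<in>UNIV. \<omega> $ i * (Phi p i (a $ i + d $ i) - Phi p i (a $ i)))"
    proof (rule sum_mono)
      fix i
      have "f $ i * d $ i \<le> Phi p i (a $ i + d $ i) - Phi p i (a $ i)"
        using Phi_ineq(2)[where p=p and i=i and b="a $ i + d $ i" and a="a $ i"] unfolding f_def phiv_def by simp
      then show "\<omega> $ i * (f $ i * d $ i) \<le> \<omega> $ i * (Phi p i (a $ i + d $ i) - Phi p i (a $ i))"
        using om[of i] by (simp add: mult_left_mono)
    qed
    also have "\<dots> = (\<Sum>i\<in>UNIV. \<omega> $ i * Phi p i ((a + d) $ i)) - (\<Sum>i\<in>UNIV. \<omega> $ i * Phi p i (a $ i))"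
      by (simp add: sum_subtractf right_diff_distrib)
    finally show ?thesis .
  qed
  have g: "gradV p a \<bullet> d = a \<bullet> d + K * ((Om *v f) \<bullet> d)"
    unfolding gradV_def f_def by (simp add: inner_add_left)
  have ns: "(norm (a + d))^2 = (norm a)^2 + 2 * (a \<bullet> d) + (norm d)^2" by (rule norm_add_sq)
  define S1 where "S1 = (\<Sum>i\<in>UNIV. \<omega> $ i * Phi p i ((a + d) $ i))"
  define S0 where "S0 = (\<Sum>i\<in>UNIV. \<omega> $ i * Phi p i (a $ i))"
  define Od where "Od = (Om *v f) \<bullet> d"
  have V1: "V p (a + d) = (norm (a + d))^2 / 2 + K * S1" unfolding V_def S1_def by simp
  have V0: "V p a = (norm a)^2 / 2 + K * S0" unfolding V_def S0_def by simp
  have up2: "K * S1 \<le> K * (S0 + Od + Ws * (norm d)^2 / 2)"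
    using mult_left_mono[OF up, of K] K_pos unfolding S1_def S0_def Od_def by simp
  have e1: "K * (S0 + Od + Ws * (norm d)^2 / 2) = K * S0 + K * Od + (K * Ws) * (norm d)^2 / 2"
    by (simp add: algebra_simps)
  have e2: "Lv * (norm d)^2 = (norm d)^2 / 2 + (K * Ws) * (norm d)^2 / 2"
    unfolding Lv_def by (simp add: algebra_simps add_divide_distrib)
  have g2: "gradV p a \<bullet> d = a \<bullet> d + K * Od" using g unfolding Od_def .
  show "V p (a + d) \<le> V p a + gradV p a \<bullet> d + Lv * (norm d)^2"
    using up2 e1 e2 g2 V1 V0 ns by linarith
  have lo2: "K * Od \<le> K * (S1 - S0)"
    using mult_left_mono[OF lo, of K] K_pos unfolding S1_def S0_def Od_def by simp
  have e3: "K * (S1 - S0) = K * S1 - K * S0" by (simp add: algebra_simps)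
  have nd0: "0 \<le> (norm d)^2" by simp
  show "V p a + gradV p a \<bullet> d \<le> V p (a + d)"
    using lo2 e3 g2 V1 V0 ns nd0 by linarith
qed

lemma V_cont: "continuous_on UNIV (V p)"
proof -
  have "continuous_on UNIV (\<lambda>z. Phi p i (z $ i))" for i
  proof -
    have "continuous_on UNIV (Phi p i)"
      using Phi_prop(2) by (meson DERIV_isCont continuous_at_imp_continuous_on)
    then show ?thesis by (rule continuous_on_compose2) (auto intro: continuous_intros)
  qed
  then show ?thesis unfolding V_def by (intro continuous_intros) auto
qed

lemma Fv_lip: "norm (Fv p a - Fv p b) \<le> LF * norm (a - b)"
proof -
  have "Fv p a - Fv p b = - (1/\<tau>) *\<^sub>R (a - b) + T *v (phiv p a - phiv p b)"
    unfolding Fv_def by (simp add: algebra_simps matrix_vector_mult_diff_distrib)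
  then have "norm (Fv p a - Fv p b) \<le> (1/\<tau>) * norm (a - b) + NT * norm (phiv p a - phiv p b)"
    using norm_triangle_ineq[of "- (1/\<tau>) *\<^sub>R (a - b)" "T *v (phiv p a - phiv p b)"]
      NT_prop(2)[of "phiv p a - phiv p b"] tau by simp
  also have "\<dots> \<le> (1/\<tau>) * norm (a - b) + NT * norm (a - b)"
    using phiv_lip[of p a b] NT_prop(1) by (simp add: mult_left_mono)
  finally show ?thesis unfolding LF_def by (simp add: algebra_simps)
qed

lemma phiv_0: "phiv p 0 = 0"
  unfolding phiv_def by (simp add: vec_eq_iff)

lemma Fv_bound: "norm (Fv p a) \<le> LF * norm a"
  using Fv_lip[of p a 0] unfolding Fv_def by (simp add: phiv_0)

lemma gradV_bound: "norm (gradV p a) \<le> G * norm a"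
proof -
  have "norm (gradV p a) \<le> norm a + K * norm (Om *v phiv p a)"
    unfolding gradV_def using norm_triangle_ineq[of a "K *\<^sub>R (Om *v phiv p a)"] K_pos by simp
  also have "\<dots> \<le> norm a + K * (NO * norm a)"
    using NO_prop(2)[of "phiv p a"] phiv_norm[of p a] K_pos NO_prop(1)
    by (meson add_left_mono mult_left_mono less_imp_le order_trans)
  finally show ?thesis unfolding G_def by (simp add: algebra_simps)
qed

end


lemma sq_bound_le: "0 \<le> (x::real) \<Longrightarrow> x^2 \<le> M \<Longrightarrow> x \<le> M + 1"
proof (rule ccontr)
  assume "0 \<le> x" "x^2 \<le> M" "\<not> x \<le> M + 1"
  moreover have "0 \<le> x^2" by simp
  ultimately have "x > 1" "x > M + 1" by linarith+
  then have "x * 1 < x * x" by (intro mult_strict_left_mono) auto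
  then show False using \<open>x^2 \<le> M\<close> \<open>x > M + 1\<close> by (simp add: power2_eq_square)
qed

lemma sum_sq_le: "((x::real) + y)^2 \<le> 2 * x^2 + 2 * y^2"
proof -
  have "0 \<le> (x - y)^2" by simp
  then show ?thesis by (simp add: power2_eq_square algebra_simps)
qed

context crnn_ctx
begin

lemma sigma_vec_split: "sigma_vec \<sigma> (z + p) = phiv p z + sigma_vec \<sigma> p"
  unfolding sigma_vec_def phiv_def by (simp add: vec_eq_iff)

lemma equilibrium_exists: "\<exists>\<xi>. - (1/\<tau>) *\<^sub>R \<xi> + T *v sigma_vec \<sigma> (\<xi> + \<mu>) + A *v \<nu> = 0"
proof -
  define e0 where "e0 = T *v sigma_vec \<sigma> \<mu> + A *v \<nu>"
  define H where "H \<xi> = Fv \<mu> \<xi> + e0" for \<xi>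
  have Heq: "H \<xi> = - (1/\<tau>) *\<^sub>R \<xi> + T *v sigma_vec \<sigma> (\<xi> + \<mu>) + A *v \<nu>" for \<xi>
    unfolding H_def Fv_def e0_def sigma_vec_split by (simp add: matrix_vector_right_distrib algebra_simps)
  define cc where "cc = 1 / (4 * \<tau>)"
  have cc: "cc > 0" unfolding cc_def using tau by simp
  define \<beta> where "\<beta> = norm e0"
  define h where "h = min 1 (cc / (4 * Lv * LF^2 + 1))"
  have Lv: "Lv > 0" and LF: "LF > 0" using consts_pos by auto
  have den: "0 < 4 * Lv * LF^2 + 1"
  proof -
    have "0 \<le> 4 * Lv * LF^2" using Lv by simp
    then show ?thesis by linarith
  qed
  have h0: "h > 0" unfolding h_def using cc den by simp
  have h1: "h \<le> 1" unfolding h_def by simp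
  have h2: "2 * Lv * LF^2 * h \<le> cc / 2"
  proof -
    have "h * (4 * Lv * LF^2 + 1) \<le> cc"
      unfolding h_def using cc den
      by (metis min.cobounded2 pos_le_divide_eq)
    moreover have "0 \<le> h" using h0 by simp
    ultimately show ?thesis by (simp add: algebra_simps)
  qed
  define E0 where "E0 = Cq * \<beta>^2 + 2 * Lv * \<beta>^2"
  have E0: "E0 \<ge> 0" unfolding E0_def using consts_pos by simp
  define R where "R = bV * (2 * E0 / cc) + E0"
  have R0: "R \<ge> 0" unfolding R_def using E0 cc consts_pos by simp
  define S where "S = {\<xi>. V \<mu> \<xi> \<le> R}"
  define P where "P \<xi> = \<xi> + h *\<^sub>R H \<xi>" for \<xi>
  have Hcont: "continuous_on UNIV H"
  proof -
    have "continuous_on UNIV (\<lambda>x. T *v phiv \<mu> x)"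
      by (rule continuous_on_compose2[OF matrix_vector_mult_linear_continuous_on phiv_cont]) auto
    then show ?thesis unfolding H_def Fv_def by (intro continuous_intros)
  qed
  have Pcont: "continuous_on S P"
    unfolding P_def by (intro continuous_intros continuous_on_subset[OF Hcont]) auto
  have closedS: "closed S"
    unfolding S_def by (intro closed_Collect_le V_cont continuous_intros)
  have boundedS: "bounded S"
    unfolding bounded_iff
  proof (intro exI ballI)
    fix \<xi> assume "\<xi> \<in> S"
    then have "(norm \<xi>)^2 \<le> 2 * R" using V_bounds(1)[of \<xi> \<mu>] unfolding S_def by simp
    then show "norm \<xi> \<le> 2 * R + 1" by (intro sq_bound_le) auto
  qed
  have compS: "compact S" using closedS boundedS by (simp add: compact_eq_bounded_closed)
  have neS: "S \<noteq> {}"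
  proof -
    have "V \<mu> 0 \<le> R" using V_bounds(2)[of \<mu> 0] R0 by simp
    then show ?thesis unfolding S_def by blast
  qed
  have convS: "convex S"
  proof (rule convexI)
    fix x y and u v :: real assume xy: "x \<in> S" "y \<in> S" and uv0: "0 \<le> u" "0 \<le> v" "u + v = 1"
    then have uv: "0 \<le> u \<and> 0 \<le> v \<and> u + v = 1" by simp
    define z where "z = u *\<^sub>R x + v *\<^sub>R y"
    have c1: "V \<mu> z + gradV \<mu> z \<bullet> (x - z) \<le> V \<mu> x" using V_convex[of \<mu> z "x - z"] by simp
    have c2: "V \<mu> z + gradV \<mu> z \<bullet> (y - z) \<le> V \<mu> y" using V_convex[of \<mu> z "y - z"] by simp
    have f1: "u * (V \<mu> z + gradV \<mu> z \<bullet> (x - z)) + v * (V \<mu> z + gradV \<mu> z \<bullet> (y - z)) \<le> u * V \<mu> x + v * V \<mu> y"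
      using uv c1 c2 by (intro add_mono mult_left_mono) auto
    have f2: "u * (V \<mu> z + gradV \<mu> z \<bullet> (x - z)) + v * (V \<mu> z + gradV \<mu> z \<bullet> (y - z))
        = V \<mu> z + gradV \<mu> z \<bullet> (u *\<^sub>R (x - z) + v *\<^sub>R (y - z))"
    proof -
      have uvV: "u * V \<mu> z + v * V \<mu> z = V \<mu> z" using uv0(3) by (metis distrib_right mult_1)
      show ?thesis
        by (simp only: inner_add_right inner_scaleR_right distrib_left) (use uvV in linarith)
    qed
    have f3: "u *\<^sub>R (x - z) + v *\<^sub>R (y - z) = 0"
    proof -
      have "u *\<^sub>R (x - z) + v *\<^sub>R (y - z) = (u *\<^sub>R x + v *\<^sub>R y) - (u + v) *\<^sub>R z"
        by (simp add: algebra_simps)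
      then show ?thesis using uv0(3) unfolding z_def by simp
    qed
    have f4: "u * V \<mu> x + v * V \<mu> y \<le> u * R + v * R"
      using xy uv unfolding S_def by (intro add_mono mult_left_mono) auto
    have f5: "u * R + v * R = R" using uv0(3) by (metis distrib_right mult_1)
    have "V \<mu> z \<le> R" using f1 f2 f3 f4 f5 by simp
    then show "u *\<^sub>R x + v *\<^sub>R y \<in> S" unfolding S_def z_def by simp
  qed
  have PS: "P \<in> S \<rightarrow> S"
  proof
    fix \<xi> assume "\<xi> \<in> S"
    then have VR: "V \<mu> \<xi> \<le> R" unfolding S_def by simp
    define n where "n = norm \<xi>"
    have Hb: "norm (H \<xi>) \<le> LF * n + \<beta>"
      unfolding H_def n_def \<beta>_def using Fv_bound[of \<mu> \<xi>] norm_triangle_ineq[of "Fv \<mu> \<xi>" e0] by linarith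
    have Hsq: "(norm (H \<xi>))^2 \<le> 2 * LF^2 * n^2 + 2 * \<beta>^2"
    proof -
      have "(norm (H \<xi>))^2 \<le> (LF * n + \<beta>)^2" using Hb by (intro power_mono) auto
      also have "\<dots> \<le> 2 * (LF * n)^2 + 2 * \<beta>^2" by (rule sum_sq_le)
      finally show ?thesis by (simp add: power_mult_distrib)
    qed
    have desc: "V \<mu> (P \<xi>) \<le> V \<mu> \<xi> + h * (gradV \<mu> \<xi> \<bullet> H \<xi>) + Lv * h^2 * (norm (H \<xi>))^2"
      using V_descent[of \<mu> \<xi> "h *\<^sub>R H \<xi>"] h0 unfolding P_def
      by (simp add: power_mult_distrib mult.assoc)
    have ki: "gradV \<mu> \<xi> \<bullet> H \<xi> \<le> - cc * n^2 + Cq * \<beta>^2"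
      using key_ineq[of \<mu> \<xi> e0] unfolding H_def cc_def n_def \<beta>_def by simp
    have t2: "Lv * h^2 * (norm (H \<xi>))^2 \<le> h * ((cc / 2) * n^2 + 2 * Lv * \<beta>^2)"
    proof -
      have "Lv * h^2 * (norm (H \<xi>))^2 \<le> Lv * h^2 * (2 * LF^2 * n^2 + 2 * \<beta>^2)"
        using Hsq Lv by (intro mult_left_mono) auto
      also have "\<dots> = h * ((2 * Lv * LF^2 * h) * n^2) + h * (h * (2 * Lv * \<beta>^2))"
        by (simp add: power2_eq_square algebra_simps)
      also have "\<dots> \<le> h * ((cc / 2) * n^2) + h * (1 * (2 * Lv * \<beta>^2))"
        using h2 h1 h0 Lv by (intro add_mono mult_left_mono mult_right_mono) auto
      finally show ?thesis by (simp add: algebra_simps)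
    qed
    have main: "V \<mu> (P \<xi>) \<le> V \<mu> \<xi> + h * (- (cc / 2) * n^2 + E0)"
    proof -
      have "h * (gradV \<mu> \<xi> \<bullet> H \<xi>) \<le> h * (- cc * n^2 + Cq * \<beta>^2)"
        using ki h0 by (intro mult_left_mono) auto
      then show ?thesis using desc t2 unfolding E0_def by (simp add: algebra_simps)
    qed
    show "P \<xi> \<in> S"
    proof (cases "E0 \<le> (cc / 2) * n^2")
      case True
      then have "h * (- (cc / 2) * n^2 + E0) \<le> 0" using h0 by (simp add: mult_nonneg_nonpos)
      then show ?thesis using main VR unfolding S_def by simp
    next
      case False
      then have "n^2 \<le> 2 * E0 / cc" using cc by (simp add: field_simps)
      then have "V \<mu> \<xi> \<le> bV * (2 * E0 / cc)"
        using V_bounds(2)[of \<mu> \<xi>] consts_pos(3) unfolding n_def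
        by (meson mult_left_mono less_imp_le order_trans)
      moreover have "h * (- (cc / 2) * n^2 + E0) \<le> E0"
      proof -
        have "h * (- (cc / 2) * n^2 + E0) \<le> h * E0" using h0 cc by (intro mult_left_mono) auto
        also have "\<dots> \<le> 1 * E0" using h1 E0 by (intro mult_right_mono) auto
        finally show ?thesis by simp
      qed
      ultimately show ?thesis using main unfolding S_def R_def by simp
    qed
  qed
  obtain \<xi> where "\<xi> \<in> S" "P \<xi> = \<xi>"
    using brouwer[OF compS convS neS Pcont PS] by blast
  then have "h *\<^sub>R H \<xi> = 0" unfolding P_def by (simp add: algebra_simps)
  then have "H \<xi> = 0" using h0 by simp
  then show ?thesis using Heq by auto
qed

end


lemma dini_mono:
  fixes z :: "real \<Rightarrow> real"
  assumes ab: "a \<le> b" and cz: "continuous_on {a..b} z"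
    and loc: "\<And>t e. t \<in> {a..<b} \<Longrightarrow> e > 0 \<Longrightarrow> \<exists>\<delta>>0. \<forall>h. 0 < h \<and> h < \<delta> \<longrightarrow> z (t + h) \<le> z t + e * h"
  shows "z b \<le> z a"
proof -
  have main: "z b \<le> z a + e * (b - a)" if e: "e > 0" for e
  proof -
    define S where "S = {t \<in> {a..b}. z t \<le> z a + e * (t - a)}"
    have cS: "closed S" unfolding S_def
      by (rule continuous_on_closed_Collect_le[OF cz]) (auto intro!: continuous_intros)
    have aS: "a \<in> S" unfolding S_def using ab by simp
    have bdd: "bdd_above S" unfolding S_def by (rule bdd_aboveI[of _ b]) auto
    define s where "s = Sup S"
    have sS: "s \<in> S" unfolding s_def using closed_contains_Sup[OF _ bdd cS] aS by blast
    have sb: "s \<le> b" using sS unfolding S_def by simp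
    have "s = b"
    proof (rule ccontr)
      assume "s \<noteq> b"
      then have slb: "s < b" using sb by simp
      have "s \<in> {a..<b}" using sS slb unfolding S_def by simp
      from loc[OF this e] obtain \<delta> where d: "\<delta> > 0" "\<And>h. 0 < h \<and> h < \<delta> \<Longrightarrow> z (s + h) \<le> z s + e * h"
        by blast
      define h where "h = min (\<delta> / 2) (b - s)"
      have h: "0 < h" "h < \<delta>" "s + h \<le> b" unfolding h_def using d(1) slb by auto
      have "z (s + h) \<le> z s + e * h" using d(2) h by blast
      also have "\<dots> \<le> z a + e * (s - a) + e * h" using sS unfolding S_def by simp
      finally have "s + h \<in> S" unfolding S_def using h sS unfolding S_def by (simp add: algebra_simps)
      then have "s + h \<le> s" unfolding s_def by (rule cSup_upper[OF _ bdd])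
      then show False using h by simp
    qed
    then show ?thesis using sS unfolding S_def by simp
  qed
  show ?thesis
  proof (cases "a = b")
    case False
    then have ba: "b - a > 0" using ab by simp
    show ?thesis
    proof (rule field_le_epsilon)
      fix e :: real assume "e > 0"
      then have "z b \<le> z a + (e / (b - a)) * (b - a)" using main[of "e / (b - a)"] ba by simp
      then show "z b \<le> z a + e" using ba by simp
    qed
  qed simp
qed

lemma exp_one_minus:
  fixes x :: real
  assumes x: "0 \<le> x" "x \<le> 1"
  shows "1 - x^2 \<le> exp x * (1 - x) \<and> exp x * (1 - x) \<le> 1"
proof -
  have "1 - x \<le> exp (- x)" using exp_ge_add_one_self[of "-x"] by simp
  then have "exp x * (1 - x) \<le> exp x * exp (- x)" by (intro mult_left_mono) auto
  also have "\<dots> = 1" by (simp add: exp_minus)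
  finally have u: "exp x * (1 - x) \<le> 1" .
  have "(1 + x) * (1 - x) \<le> exp x * (1 - x)"
    using exp_ge_add_one_self[of x] x by (intro mult_right_mono) auto
  then have "1 - x^2 \<le> exp x * (1 - x)" by (simp add: power2_eq_square algebra_simps)
  then show ?thesis using u by simp
qed

lemma exp_factor_bound:
  fixes x q :: real
  assumes "0 \<le> x" "x \<le> 1"
  shows "exp x * (1 - x) * q \<le> q + x^2 * \<bar>q\<bar>"
proof (cases "q \<ge> 0")
  case True
  have "exp x * (1 - x) * q \<le> 1 * q" using conjunct2[OF exp_one_minus[OF assms]] True by (rule mult_right_mono)
  moreover have "0 \<le> x^2 * q" using True by simp
  ultimately show ?thesis using True by linarith
next
  case False
  have "exp x * (1 - x) * q \<le> (1 - x^2) * q"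
    using conjunct1[OF exp_one_minus[OF assms]] False by (intro mult_right_mono_neg) auto
  then show ?thesis using False by (simp add: algebra_simps)
qed

lemma comparison:
  fixes w :: "real \<Rightarrow> real"
  assumes k: "k > 0" and E: "E \<ge> 0" and cw: "continuous_on {0..} w"
    and loc: "\<And>t e. t \<ge> 0 \<Longrightarrow> e > 0 \<Longrightarrow> \<exists>\<delta>>0. \<forall>h. 0 < h \<and> h < \<delta> \<longrightarrow>
                  w (t + h) \<le> w t + h * (- k * w t + E) + h * e"
    and t: "t \<ge> 0"
  shows "w t \<le> exp (- k * t) * w 0 + E / k"
proof -
  define z where "z s = exp (k * s) * (w s - E / k)" for s
  have cz: "continuous_on {0..t} z"
    unfolding z_def by (intro continuous_intros continuous_on_subset[OF cw]) auto
  have "z t \<le> z 0"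
  proof (rule dini_mono[OF t cz])
    fix s e :: real assume s: "s \<in> {0..<t}" and e: "e > 0"
    define X where "X = exp (k * s)"
    have X: "X > 0" unfolding X_def by simp
    define q where "q = w s - E / k"
    define e' where "e' = e / (2 * X * exp 1)"
    have e': "e' > 0" unfolding e'_def using e X by simp
    obtain \<delta>1 where d1: "\<delta>1 > 0" "\<And>h. 0 < h \<and> h < \<delta>1 \<Longrightarrow> w (s + h) \<le> w s + h * (- k * w s + E) + h * e'"
      using loc[of s e'] s e' by auto
    define \<delta> where "\<delta> = min \<delta>1 (min (1 / k) (e / (2 * X * k^2 * \<bar>q\<bar> + 1)))"
    have "0 \<le> 2 * X * k^2 * \<bar>q\<bar>" using X by simp
    then have den: "2 * X * k^2 * \<bar>q\<bar> + 1 > 0" by linarith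
    have dpos: "\<delta> > 0" unfolding \<delta>_def using d1 k e den by simp
    show "\<exists>\<delta>>0. \<forall>h. 0 < h \<and> h < \<delta> \<longrightarrow> z (s + h) \<le> z s + e * h"
    proof (intro exI conjI allI impI)
      show "\<delta> > 0" by (fact dpos)
      fix h assume h: "0 < h \<and> h < \<delta>"
      have hd1: "h < \<delta>1" and hk: "h < 1 / k" and he: "h < e / (2 * X * k^2 * \<bar>q\<bar> + 1)"
        using h unfolding \<delta>_def by auto
      have kh: "0 \<le> k * h" "k * h \<le> 1" using h k hk by (auto simp: field_simps)
      have w1: "w (s + h) - E / k \<le> q * (1 - k * h) + h * e'"
      proof -
        have "w (s + h) \<le> w s + h * (- k * w s + E) + h * e'" using d1(2) h hd1 by blast
        moreover have "h * (- k * w s + E) = - (k * h) * q" unfolding q_def using k by (simp add: field_simps)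
        ultimately show ?thesis unfolding q_def by (simp add: algebra_simps)
      qed
      have "z (s + h) = X * (exp (k * h) * (w (s + h) - E / k))"
        unfolding z_def X_def by (simp add: distrib_left exp_add mult.assoc)
      also have "\<dots> \<le> X * (exp (k * h) * (q * (1 - k * h) + h * e'))"
        using w1 X by (intro mult_left_mono) auto
      also have "\<dots> = X * (exp (k * h) * (1 - k * h) * q) + X * (exp (k * h) * (h * e'))"
        by (simp add: algebra_simps)
      also have "\<dots> \<le> X * (q + (k * h)^2 * \<bar>q\<bar>) + X * (exp 1 * (h * e'))"
      proof (intro add_mono mult_left_mono)
        show "exp (k * h) * (1 - k * h) * q \<le> q + (k * h)^2 * \<bar>q\<bar>" by (rule exp_factor_bound[OF kh])
        show "exp (k * h) * (h * e') \<le> exp 1 * (h * e')"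
          using kh h e' by (intro mult_right_mono) auto
      qed (use X in auto)
      also have "\<dots> = z s + h * (X * k^2 * \<bar>q\<bar> * h) + h * e / 2"
        unfolding z_def X_def q_def e'_def by (simp add: power2_eq_square field_simps)
      also have "\<dots> \<le> z s + h * (e / 2) + h * e / 2"
      proof -
        have "X * k^2 * \<bar>q\<bar> * h \<le> X * k^2 * \<bar>q\<bar> * (e / (2 * X * k^2 * \<bar>q\<bar> + 1))"
          using he X by (intro mult_left_mono) auto
        also have "\<dots> \<le> e / 2"
          using den e X by (simp add: field_simps)
        finally have B: "X * k^2 * \<bar>q\<bar> * h \<le> e / 2" .
        have "h * (X * k^2 * \<bar>q\<bar> * h) \<le> h * (e / 2)" using B h by (intro mult_left_mono) auto
        then show ?thesis by linarith
      qed
      also have "\<dots> = z s + e * h" by (simp add: algebra_simps)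
      finally show "z (s + h) \<le> z s + e * h" .
    qed
  qed
  then have "exp (k * t) * (w t - E / k) \<le> w 0 - E / k" unfolding z_def by simp
  then have "w t - E / k \<le> exp (- k * t) * (w 0 - E / k)"
    by (simp add: exp_minus field_simps)
  also have "\<dots> \<le> exp (- k * t) * w 0"
    using E k by (simp add: algebra_simps)
  finally show ?thesis by simp
qed



context crnn_ctx
begin

lemma Fv_cont: "continuous_on UNIV (Fv p)"
proof -
  have "continuous_on UNIV (\<lambda>x. T *v phiv p x)"
    by (rule continuous_on_compose2[OF matrix_vector_mult_linear_continuous_on phiv_cont]) auto
  then show ?thesis unfolding Fv_def by (intro continuous_intros)
qed

lemma local_est:
  fixes y q :: "real \<Rightarrow> real^'l"
  assumes yc: "continuous_on {0..} y"
    and yi: "\<And>t. t \<ge> 0 \<Longrightarrow> ((\<lambda>s. Fv p (y s) + q s) has_integral (y t - y 0)) {0..t}"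
    and qb: "\<And>s. s \<ge> 0 \<Longrightarrow> norm (q s) \<le> Q"
    and t: "t \<ge> 0" and e: "e > 0"
  shows "\<exists>\<delta>>0. \<forall>h. 0 < h \<and> h < \<delta> \<longrightarrow>
           V p (y (t + h)) \<le> V p (y t) + h * (- (1 / (4 * \<tau>) / bV) * V p (y t) + Cq * Q^2) + h * e"
proof -
  define a where "a = y t"
  define g where "g s = Fv p (y s) + q s" for s
  have Q0: "Q \<ge> 0" using qb[of 0] norm_ge_zero[of "q 0"] by linarith
  define M where "M = LF * norm a + Q"
  have M0: "M \<ge> 0" unfolding M_def using consts_pos Q0 by simp
  define cG where "cG = G * norm a * LF"
  have cG0: "cG \<ge> 0" unfolding cG_def using consts_pos by simp
  define \<eta> where "\<eta> = min 1 (e / (2 * (cG + 1)))"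
  have \<eta>: "\<eta> > 0" "\<eta> \<le> 1" "cG * \<eta> \<le> e / 2"
  proof -
    show "\<eta> > 0" unfolding \<eta>_def using e cG0 by simp
    show "\<eta> \<le> 1" unfolding \<eta>_def by simp
    have "cG * \<eta> \<le> (cG + 1) * \<eta>" using \<open>\<eta> > 0\<close> by (simp add: mult_right_mono)
    also have "\<dots> \<le> (cG + 1) * (e / (2 * (cG + 1)))"
      unfolding \<eta>_def using cG0 by (intro mult_left_mono) auto
    also have "\<dots> = e / 2" using cG0 by (simp add: field_simps)
    finally show "cG * \<eta> \<le> e / 2" .
  qed
  obtain \<delta>1 where d1: "\<delta>1 > 0" "\<And>s. s \<in> {0..} \<Longrightarrow> dist s t < \<delta>1 \<Longrightarrow> dist (y s) (y t) < \<eta>"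
    using yc t \<eta>(1) unfolding continuous_on_iff by (metis atLeast_iff)
  define cL where "cL = Lv * (M + LF)^2"
  have cL0: "cL \<ge> 0" unfolding cL_def using consts_pos by simp
  define \<delta> where "\<delta> = min \<delta>1 (e / (2 * (cL + 1)))"
  have dpos: "\<delta> > 0" unfolding \<delta>_def using d1(1) e cL0 by simp
  show ?thesis
  proof (intro exI conjI allI impI)
    show "\<delta> > 0" by (fact dpos)
    fix h assume h: "0 < h \<and> h < \<delta>"
    have h0: "h > 0" and hd1: "h < \<delta>1" and hL: "h < e / (2 * (cL + 1))" using h unfolding \<delta>_def by auto
    define \<Delta> where "\<Delta> = y (t + h) - a"
      have gi: "(g has_integral \<Delta>) {t..t+h}"
    proof -
      have i1: "(g has_integral (y (t + h) - y 0)) {0..t+h}" using yi[of "t + h"] t h0 unfolding g_def by simp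
      have i0: "(g has_integral (y t - y 0)) {0..t}" using yi[OF t] unfolding g_def by simp
      have int: "g integrable_on {t..t+h}"
        using integrable_subinterval_real[OF has_integral_integrable[OF i1], where c=t and d="t + h"] t by simp
      have "integral {0..t} g + integral {t..t+h} g = integral {0..t+h} g"
        using Henstock_Kurzweil_Integration.integral_combine[OF t _ has_integral_integrable[OF i1]] h0 by simp
      then have "integral {t..t+h} g = \<Delta>"
        using integral_unique[OF i1] integral_unique[OF i0] unfolding \<Delta>_def a_def by (simp add: algebra_simps)
      then show ?thesis using int by (metis integrable_integral)
    qed
    define r where "r s = Fv p (y s) - Fv p a" for s
    have rc: "continuous_on {t..t+h} r"
      unfolding r_def
      by (intro continuous_intros continuous_on_compose2[OF Fv_cont] continuous_on_subset[OF yc]) (use t in auto)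
    define R where "R = integral {t..t+h} r"
    have ri: "(r has_integral R) {t..t+h}" unfolding R_def using integrable_continuous_real[OF rc] by auto
    have ci: "((\<lambda>s. Fv p a) has_integral (h *\<^sub>R Fv p a)) {t..t+h}"
      using has_integral_const_real[of "Fv p a" t "t + h"] h0 by (simp add: content_real)
    define I2 where "I2 = \<Delta> - h *\<^sub>R Fv p a - R"
    have qi: "(q has_integral I2) {t..t+h}"
    proof -
      have "((\<lambda>s. g s - Fv p a - r s) has_integral I2) {t..t+h}"
        unfolding I2_def by (intro has_integral_diff gi ci ri)
      moreover have "(\<lambda>s. g s - Fv p a - r s) = q" unfolding g_def r_def by (simp add: fun_eq_iff)
      ultimately show ?thesis by simp
    qed
    have I2b: "norm I2 \<le> Q * h"
      using has_integral_bound[of Q q I2 t "t + h"] Q0 qi qb t h0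
      by (simp add: content_real)
    have yclose: "norm (y s - a) \<le> \<eta>" if "s \<in> {t..t+h}" for s
    proof -
      have "s \<in> {0..}" "dist s t < \<delta>1" using that t hd1 by (auto simp: dist_real_def)
      then show ?thesis using d1(2) unfolding a_def dist_norm by fastforce
    qed
    have Rb: "norm R \<le> (LF * \<eta>) * h"
    proof -
      have "norm (r s) \<le> LF * \<eta>" if "s \<in> cbox t (t+h)" for s
      proof -
        have "norm (r s) \<le> LF * norm (y s - a)" unfolding r_def by (rule Fv_lip)
        also have "\<dots> \<le> LF * \<eta>" using yclose[of s] that consts_pos by (intro mult_left_mono) auto
        finally show ?thesis .
      qed
      then show ?thesis
        using has_integral_bound[of "LF * \<eta>" r R t "t + h"] ri \<eta>(1) consts_pos h0
        by (simp add: content_real)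
    qed
    have Dsplit: "\<Delta> = h *\<^sub>R (Fv p a + (1 / h) *\<^sub>R I2) + R"
      unfolding I2_def using h0 by (simp add: algebra_simps)
    have desc: "V p (y (t + h)) \<le> V p a + gradV p a \<bullet> \<Delta> + Lv * (norm \<Delta>)^2"
      using V_descent[of p a \<Delta>] unfolding \<Delta>_def by simp
    have ki: "gradV p a \<bullet> (Fv p a + (1 / h) *\<^sub>R I2) \<le> - ((norm a)^2) / (4 * \<tau>) + Cq * Q^2"
    proof -
      have "norm ((1 / h) *\<^sub>R I2) \<le> Q" using I2b h0 by (simp add: field_simps)
      then have "(norm ((1 / h) *\<^sub>R I2))^2 \<le> Q^2" by (intro power_mono) auto
      then have "Cq * (norm ((1 / h) *\<^sub>R I2))^2 \<le> Cq * Q^2" using consts_pos by (intro mult_left_mono) auto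
      then show ?thesis using key_ineq[of p a "(1 / h) *\<^sub>R I2"] by linarith
    qed
    have gR: "gradV p a \<bullet> R \<le> cG * \<eta> * h"
    proof -
      have "gradV p a \<bullet> R \<le> norm (gradV p a) * norm R"
        using Cauchy_Schwarz_ineq2[of "gradV p a" R] by linarith
      also have "\<dots> \<le> (G * norm a) * ((LF * \<eta>) * h)"
        using gradV_bound[of p a] Rb consts_pos(1) by (intro mult_mono) auto
      also have "\<dots> = cG * \<eta> * h" unfolding cG_def by (simp add: algebra_simps)
      finally show ?thesis .
    qed
    have Db: "norm \<Delta> \<le> h * (M + LF)"
    proof -
      have De: "\<Delta> = h *\<^sub>R Fv p a + R + I2" unfolding I2_def by simp
      have "norm \<Delta> \<le> norm (h *\<^sub>R Fv p a + R) + norm I2" unfolding De by (rule norm_triangle_ineq)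
      also have "\<dots> \<le> norm (h *\<^sub>R Fv p a) + norm R + norm I2"
        using norm_triangle_ineq[of "h *\<^sub>R Fv p a" R] by linarith
      finally have "norm \<Delta> \<le> norm (h *\<^sub>R Fv p a) + norm R + norm I2" .
      also have "\<dots> \<le> h * (LF * norm a) + (LF * \<eta>) * h + Q * h"
        using Fv_bound[of p a] Rb I2b h0 by (intro add_mono) (auto intro: mult_left_mono)
      also have "\<dots> \<le> h * (LF * norm a) + LF * h + Q * h"
        using \<eta>(2) consts_pos h0 by (simp add: mult_right_mono mult_left_mono)
      also have "\<dots> = h * (M + LF)" unfolding M_def by (simp add: algebra_simps)
      finally show ?thesis .
    qed
    have Dsq: "Lv * (norm \<Delta>)^2 \<le> h * (e / 2)"
    proof -
      have "(norm \<Delta>)^2 \<le> (h * (M + LF))^2" using Db by (intro power_mono) auto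
      then have "Lv * (norm \<Delta>)^2 \<le> Lv * (h * (M + LF))^2" using consts_pos by (intro mult_left_mono) auto
      also have "\<dots> = h * (h * cL)" unfolding cL_def by (simp add: power2_eq_square algebra_simps)
      also have "\<dots> \<le> h * (e / 2)"
      proof -
        have "h * cL \<le> (e / (2 * (cL + 1))) * cL" using hL cL0 by (intro mult_right_mono) auto
        also have "\<dots> \<le> e / 2" using cL0 e by (simp add: field_simps)
        finally show ?thesis using h0 by (intro mult_left_mono) auto
      qed
      finally show ?thesis .
    qed
    have Vb: "(1 / (4 * \<tau>) / bV) * V p a \<le> (norm a)^2 / (4 * \<tau>)"
    proof -
      have "V p a \<le> bV * (norm a)^2" by (rule V_bounds(2))
      then have "V p a / bV \<le> (norm a)^2" using consts_pos by (simp add: field_simps)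
      then have "(1 / (4 * \<tau>)) * (V p a / bV) \<le> (1 / (4 * \<tau>)) * (norm a)^2" using tau by (intro mult_left_mono) auto
      then show ?thesis by simp
    qed
    have "gradV p a \<bullet> \<Delta> = h * (gradV p a \<bullet> (Fv p a + (1 / h) *\<^sub>R I2)) + gradV p a \<bullet> R"
      unfolding Dsplit by (simp add: inner_add_right)
    also have "\<dots> \<le> h * (- ((norm a)^2) / (4 * \<tau>) + Cq * Q^2) + cG * \<eta> * h"
      using ki gR h0 by (intro add_mono mult_left_mono) auto
    also have "\<dots> \<le> h * (- (1 / (4 * \<tau>) / bV) * V p a + Cq * Q^2) + h * (e / 2)"
    proof -
      have "h * (- ((norm a)^2) / (4 * \<tau>) + Cq * Q^2) \<le> h * (- (1 / (4 * \<tau>) / bV) * V p a + Cq * Q^2)"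
        using Vb h0 by (intro mult_left_mono) auto
      moreover have "cG * \<eta> * h \<le> h * (e / 2)" using \<eta>(3) h0 by (simp add: mult.commute mult_left_mono)
      ultimately show ?thesis by linarith
    qed
    finally have "gradV p a \<bullet> \<Delta> \<le> h * (- (1 / (4 * \<tau>) / bV) * V p a + Cq * Q^2) + h * (e / 2)" .
    then show "V p (y (t + h)) \<le> V p (y t) + h * (- (1 / (4 * \<tau>) / bV) * V p (y t) + Cq * Q^2) + h * e"
      using desc Dsq unfolding a_def by (simp add: algebra_simps)
  qed
qed

end


lemma inj_bounded_below:
  fixes A :: "real^'n^'l"
  assumes "inj ((*v) A)"
  shows "\<exists>\<kappa>>0. \<forall>v. norm v \<le> \<kappa> * norm (A *v v)"
proof -
  have lin: "linear ((*v) A)" by simp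
  obtain g where g: "linear g" "g \<circ> (*v) A = id"
    using linear_injective_left_inverse[OF lin assms] by blast
  have bl: "bounded_linear g" using g(1) by (simp add: linear_conv_bounded_linear)
  define \<kappa> where "\<kappa> = onorm g + 1"
  have k0: "\<kappa> > 0" unfolding \<kappa>_def using onorm_pos_le[OF bl] by simp
  have "norm v \<le> \<kappa> * norm (A *v v)" for v
  proof -
    have "v = g (A *v v)" using g(2) by (metis comp_apply id_apply)
    then have "norm v = norm (g (A *v v))" by simp
    also have "\<dots> \<le> onorm g * norm (A *v v)" by (rule onorm[OF bl])
    also have "\<dots> \<le> \<kappa> * norm (A *v v)" unfolding \<kappa>_def by (simp add: mult_right_mono)
    finally show ?thesis .
  qed
  then show ?thesis using k0 by blast
qed

lemma mat_bound: "\<exists>N>0. \<forall>v. norm ((M::real^'a^'b) *v v) \<le> N * norm v"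
proof -
  have bl: "bounded_linear ((*v) M)" by simp
  have "norm (M *v v) \<le> (onorm ((*v) M) + 1) * norm v" for v
    using onorm[OF bl, of v] by (simp add: distrib_right add_increasing2)
  moreover have "onorm ((*v) M) + 1 > 0" using onorm_pos_le[OF bl] by simp
  ultimately show ?thesis by blast
qed

lemma sq_le_sum_sq: "(x::real) \<ge> 0 \<Longrightarrow> a \<ge> 0 \<Longrightarrow> b \<ge> 0 \<Longrightarrow> x^2 \<le> a^2 + b^2 \<Longrightarrow> x \<le> a + b"
proof -
  assume "x \<ge> 0" "a \<ge> 0" "b \<ge> 0" "x^2 \<le> a^2 + b^2"
  moreover have "a^2 + b^2 \<le> (a + b)^2" using \<open>a \<ge> 0\<close> \<open>b \<ge> 0\<close> by (simp add: power2_eq_square algebra_simps)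
  ultimately show "x \<le> a + b" by (meson power2_le_imp_le add_nonneg_nonneg order_trans)
qed

theorem proposition4:
  fixes \<tau> :: real and W :: "real^'l^'n" and A :: "real^'n^'l" and B :: "real^'m^'l"
    and \<mu> :: "real^'l" and \<nu> :: "real^'n" and \<sigma> :: "real \<Rightarrow> real" and \<omega> :: "real^'l"
  assumes "CARD('n) \<le> CARD('l)"
    and "\<tau> > 0"
    and "strict_mono \<sigma>" and "continuous_on UNIV \<sigma>" and "\<sigma> 0 = 0"
    and "\<And>r r'. r \<noteq> r' \<Longrightarrow> 0 \<le> (\<sigma> r - \<sigma> r') / (r - r') \<and> (\<sigma> r - \<sigma> r') / (r - r') \<le> 1"
    and "rank A = CARD('n)"
    and "\<And>i. \<omega> $ i > 0"
    and "neg_definite (diag_mat \<omega> ** (A ** W - (1/\<tau>) *\<^sub>R mat 1)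
                      + (transpose W ** transpose A - (1/\<tau>) *\<^sub>R mat 1) ** diag_mat \<omega>)"
  shows "ISS (crnn \<tau> W A B \<mu> \<nu> \<sigma>)"
proof -
  interpret crnn_ctx \<tau> W A B \<mu> \<nu> \<sigma> \<omega>
    by unfold_locales (use assms in auto)
  obtain \<xi>e where eq: "- (1/\<tau>) *\<^sub>R \<xi>e + T *v sigma_vec \<sigma> (\<xi>e + \<mu>) + A *v \<nu> = 0"
    using equilibrium_exists by blast
  define xe where "xe = \<tau> *\<^sub>R (W *v sigma_vec \<sigma> (\<xi>e + \<mu>) + \<nu>)"
  have eq': "\<xi>e = \<tau> *\<^sub>R (T *v sigma_vec \<sigma> (\<xi>e + \<mu>) + A *v \<nu>)"
  proof -
    have "(1/\<tau>) *\<^sub>R \<xi>e = T *v sigma_vec \<sigma> (\<xi>e + \<mu>) + A *v \<nu>" using eq by (simp add: algebra_simps)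
    then have "\<tau> *\<^sub>R ((1/\<tau>) *\<^sub>R \<xi>e) = \<tau> *\<^sub>R (T *v sigma_vec \<sigma> (\<xi>e + \<mu>) + A *v \<nu>)" by simp
    then show ?thesis using tau by simp
  qed
  have Axe: "A *v xe = \<xi>e"
    unfolding xe_def T_def
    by (subst eq') (simp add: matrix_vector_mult_scaleR matrix_vector_right_distrib matrix_vector_mul_assoc T_def)
  have fxe: "crnn \<tau> W A B \<mu> \<nu> \<sigma> xe 0 = 0"
    unfolding crnn_def Axe using tau unfolding xe_def by simp
  obtain \<kappa> where \<kappa>: "\<kappa> > 0" "\<And>v. norm v \<le> \<kappa> * norm (A *v v)"
    using inj_bounded_below[of A] rk full_rank_injective by blast
  obtain NA where NA: "NA > 0" "\<And>v. norm (A *v v) \<le> NA * norm v" using mat_bound by blast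
  obtain NB where NB: "NB > 0" "\<And>v. norm (B *v v) \<le> NB * norm v" using mat_bound by blast
  define k where "k = 1 / (4 * \<tau>) / bV"
  have k0: "k > 0" unfolding k_def using tau consts_pos by simp
  define c1 where "c1 = 2 * bV + 1"
  define c2 where "c2 = 2 * Cq * (NT * NB)^2 / k + 1"
  have c1: "c1 > 0" "2 * bV \<le> c1^2" unfolding c1_def using consts_pos by (auto simp: power2_eq_square algebra_simps)
  have c2: "c2 \<ge> 1" "2 * Cq * (NT * NB)^2 / k \<le> c2^2"
  proof -
    have "0 \<le> 2 * Cq * (NT * NB)^2 / k" using consts_pos k0 by simp
    then show "c2 \<ge> 1" unfolding c2_def by simp
    then have "c2 \<le> c2 * c2" by (simp add: mult_le_cancel_left1)
    then show "2 * Cq * (NT * NB)^2 / k \<le> c2^2" unfolding c2_def by (simp add: power2_eq_square)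
  qed
  define \<beta> where "\<beta> r t = \<kappa> * c1 * NA * exp (- (k / 2) * t) * r" for r t :: real
  define \<gamma> where "\<gamma> s = (\<kappa> * c2 + 1) * s" for s :: real
  have Cb: "\<kappa> * c1 * NA > 0" using \<kappa> c1 NA by simp
  have g0: "\<kappa> * c2 + 1 > 0" using \<kappa> c2 by (simp add: add_pos_nonneg)
  have KL: "class_KL \<beta>"
    unfolding class_KL_def
  proof (intro conjI allI impI)
    fix t :: real assume "t \<ge> 0"
    show "class_K (\<lambda>r. \<beta> r t)"
      unfolding class_K_def \<beta>_def
    proof (intro conjI)
      show "continuous_on {0..} (\<lambda>r. \<kappa> * c1 * NA * exp (- (k / 2) * t) * r)" by (intro continuous_intros)
      show "\<kappa> * c1 * NA * exp (- (k / 2) * t) * 0 = 0" by simp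
      show "strict_mono_on {0..} (\<lambda>r. \<kappa> * c1 * NA * exp (- (k / 2) * t) * r)"
      proof (rule monotone_onI)
        fix r s :: real assume "r \<in> {0..}" "s \<in> {0..}" "r < s"
        moreover have "0 < \<kappa> * c1 * NA * exp (- (k / 2) * t)" using Cb by simp
        ultimately show "\<kappa> * c1 * NA * exp (- (k / 2) * t) * r < \<kappa> * c1 * NA * exp (- (k / 2) * t) * s"
          by (intro mult_strict_left_mono) auto
      qed
    qed
  next
    fix r :: real assume r: "r \<ge> 0"
    show "antimono_on {0..} (\<lambda>t. \<beta> r t)"
      unfolding \<beta>_def
    proof (rule monotone_onI)
      fix s t :: real assume "s \<in> {0..}" "t \<in> {0..}" "s \<le> t"
      then have "exp (- (k / 2) * t) \<le> exp (- (k / 2) * s)" using k0 by (simp add: mult_left_mono)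
      then show "\<kappa> * c1 * NA * exp (- (k / 2) * t) * r \<le> \<kappa> * c1 * NA * exp (- (k / 2) * s) * r"
        using Cb r by (intro mult_right_mono mult_left_mono) auto
    qed
    have lim: "((\<lambda>t. exp (- (k / 2) * t)) \<longlongrightarrow> 0) at_top"
    proof -
      have "filterlim (\<lambda>t. (- (k / 2)) * t) at_bot at_top"
        by (rule filterlim_tendsto_neg_mult_at_bot[OF tendsto_const _ filterlim_ident]) (use k0 in simp)
      from filterlim_compose[OF exp_at_bot this] show ?thesis .
    qed
    have "((\<lambda>t. \<kappa> * c1 * NA * exp (- (k / 2) * t) * r) \<longlongrightarrow> \<kappa> * c1 * NA * 0 * r) at_top"
      by (intro tendsto_intros lim)
    then show "((\<lambda>t. \<beta> r t) \<longlongrightarrow> 0) at_top" unfolding \<beta>_def by simp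
  qed
  have Kinf: "class_K_inf \<gamma>"
    unfolding class_K_inf_def class_K_def \<gamma>_def
  proof (intro conjI)
    show "continuous_on {0..} (\<lambda>s. (\<kappa> * c2 + 1) * s)" by (intro continuous_intros)
    show "(\<kappa> * c2 + 1) * 0 = 0" by simp
    show "strict_mono_on {0..} (\<lambda>s. (\<kappa> * c2 + 1) * s)"
      by (rule monotone_onI) (use g0 in simp)
    show "filterlim (\<lambda>s. (\<kappa> * c2 + 1) * s) at_top at_top"
      by (rule filterlim_tendsto_pos_mult_at_top[OF tendsto_const g0 filterlim_ident])
  qed
  show ?thesis
    unfolding ISS_def
  proof (intro exI conjI allI impI)
    show "crnn \<tau> W A B \<mu> \<nu> \<sigma> xe 0 = 0" by (fact fxe)
    show "class_KL \<beta>" by (fact KL)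
    show "class_K_inf \<gamma>" by (fact Kinf)
    fix u :: "real \<Rightarrow> real^'m" and x :: "real \<Rightarrow> real^'n" and t :: real
    assume H: "u measurable_on {0..} \<and> bounded (u ` {0..}) \<and> continuous_on {0..} x \<and>
        (\<forall>t\<ge>0. ((\<lambda>s. crnn \<tau> W A B \<mu> \<nu> \<sigma> (x s) (u s)) has_integral (x t - x 0)) {0..t})"
    assume t: "t \<ge> 0"
    define D where "D = Sup ((\<lambda>s. norm (u s)) ` {0..})"
    have bddu: "bdd_above ((\<lambda>s. norm (u s)) ` {0..})"
    proof -
      obtain Mu where "\<forall>v\<in>u ` {0..}. norm v \<le> Mu" using H unfolding bounded_iff by blast
      then show ?thesis by (intro bdd_aboveI[of _ Mu]) auto
    qed
    have uD: "norm (u s) \<le> D" if "s \<ge> 0" for s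
      unfolding D_def using that by (intro cSup_upper[OF _ bddu]) auto
    have D0: "D \<ge> 0" using uD[of 0] norm_ge_zero[of "u 0"] by linarith
    define p where "p = \<xi>e + \<mu>"
    define y where "y s = A *v (x s - xe)" for s
    define q where "q s = T *v (sigma_vec \<sigma> (A *v x s + B *v u s + \<mu>) - sigma_vec \<sigma> (A *v x s + \<mu>))" for s
    define Q where "Q = NT * NB * D"
    have yc: "continuous_on {0..} y"
    proof -
      have "continuous_on {0..} x" using H by blast
      then have "continuous_on {0..} (\<lambda>s. x s - xe)" by (intro continuous_intros)
      then show ?thesis unfolding y_def
        by (rule continuous_on_compose2[OF matrix_vector_mult_linear_continuous_on]) auto
    qed
    have ident: "A *v crnn \<tau> W A B \<mu> \<nu> \<sigma> (x s) (u s) = Fv p (y s) + q s" for s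
    proof -
      have yp: "y s + p = A *v x s + \<mu>"
        unfolding y_def p_def using Axe by (simp add: matrix_vector_mult_diff_distrib)
      have ph: "phiv p (y s) = sigma_vec \<sigma> (A *v x s + \<mu>) - sigma_vec \<sigma> p"
        using sigma_vec_split[of "y s" p] yp by simp
      have Anu: "A *v \<nu> = (1/\<tau>) *\<^sub>R \<xi>e - T *v sigma_vec \<sigma> p"
        using eq unfolding p_def by (simp add: algebra_simps)
      have ys: "y s = A *v x s - \<xi>e"
        unfolding y_def using Axe by (simp add: matrix_vector_mult_diff_distrib)
      have 1: "Fv p (y s) + q s = - (1/\<tau>) *\<^sub>R (A *v x s - \<xi>e)
          + T *v (sigma_vec \<sigma> (A *v x s + B *v u s + \<mu>) - sigma_vec \<sigma> p)"
        unfolding Fv_def q_def ph unfolding ys by (simp add: matrix_vector_mult_diff_distrib)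
      have 2: "A *v crnn \<tau> W A B \<mu> \<nu> \<sigma> (x s) (u s) = - (1/\<tau>) *\<^sub>R (A *v x s)
          + T *v sigma_vec \<sigma> (A *v x s + B *v u s + \<mu>) + A *v \<nu>"
        unfolding crnn_def T_def
        by (simp add: matrix_vector_right_distrib matrix_vector_mult_diff_distrib matrix_vector_mult_scaleR matrix_vector_mul_assoc)
      show ?thesis unfolding 1 2 Anu
        by (simp add: matrix_vector_mult_diff_distrib scaleR_diff_right algebra_simps)
    qed
    have yi: "((\<lambda>s. Fv p (y s) + q s) has_integral (y t - y 0)) {0..t}" if "t \<ge> 0" for t
    proof -
      have "((\<lambda>s. A *v crnn \<tau> W A B \<mu> \<nu> \<sigma> (x s) (u s)) has_integral (A *v (x t - x 0))) {0..t}"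
        using has_integral_linear[OF H[THEN conjunct2, THEN conjunct2, THEN conjunct2, rule_format, OF that]
            matrix_vector_mul_bounded_linear[of A]]
        by (simp add: o_def)
      moreover have "A *v (x t - x 0) = y t - y 0" unfolding y_def by (simp add: matrix_vector_mult_diff_distrib)
      ultimately show ?thesis unfolding ident by simp
    qed
    have qb: "norm (q s) \<le> Q" if "s \<ge> 0" for s
    proof -
      have sl: "norm (sigma_vec \<sigma> (A *v x s + B *v u s + \<mu>) - sigma_vec \<sigma> (A *v x s + \<mu>)) \<le> norm (B *v u s)"
      proof (rule norm_le_componentwise_cart)
        fix i
        have "\<bar>\<sigma> ((A *v x s + \<mu>) $ i + (B *v u s) $ i) - \<sigma> ((A *v x s + \<mu>) $ i)\<bar> \<le> \<bar>(B *v u s) $ i\<bar>"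
          using slope_facts(2)[OF sig_slope[where b="(A *v x s + \<mu>) $ i + (B *v u s) $ i" and a="(A *v x s + \<mu>) $ i"]]
          by simp
        then show "norm ((sigma_vec \<sigma> (A *v x s + B *v u s + \<mu>) - sigma_vec \<sigma> (A *v x s + \<mu>)) $ i) \<le> norm ((B *v u s) $ i)"
          unfolding sigma_vec_def by (simp add: algebra_simps)
      qed
      have "norm (q s) \<le> NT * norm (sigma_vec \<sigma> (A *v x s + B *v u s + \<mu>) - sigma_vec \<sigma> (A *v x s + \<mu>))"
        unfolding q_def by (rule NT_prop(2))
      also have "\<dots> \<le> NT * (NB * norm (u s))"
        using sl NB(2)[of "u s"] NT_prop(1) by (intro mult_left_mono) auto
      also have "\<dots> \<le> NT * (NB * D)"
        using uD[OF that] NB(1) NT_prop(1) by (intro mult_left_mono) auto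
      finally show ?thesis unfolding Q_def by (simp add: mult.assoc)
    qed
    define w where "w s = V p (y s)" for s
    have wc: "continuous_on {0..} w"
      unfolding w_def by (rule continuous_on_compose2[OF V_cont yc]) auto
    have Q0: "Cq * Q^2 \<ge> 0" using consts_pos by simp
    have wb: "w t \<le> exp (- k * t) * w 0 + Cq * Q^2 / k"
    proof (rule comparison[OF k0 Q0 wc _ t])
      fix t e :: real assume "t \<ge> 0" "e > 0"
      then show "\<exists>\<delta>>0. \<forall>h. 0 < h \<and> h < \<delta> \<longrightarrow> w (t + h) \<le> w t + h * (- k * w t + Cq * Q^2) + h * e"
        using local_est[OF yc yi qb] unfolding w_def k_def by blast
    qed
    have y0b: "norm (y 0) \<le> NA * norm (x 0 - xe)" unfolding y_def by (rule NA(2))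
    have "(norm (y t))^2 \<le> 2 * w t" using V_bounds(1)[of "y t" p] unfolding w_def by simp
    also have "\<dots> \<le> 2 * (exp (- k * t) * w 0) + 2 * Cq * Q^2 / k" using wb by simp
    also have "\<dots> \<le> 2 * (exp (- k * t) * (bV * (norm (y 0))^2)) + 2 * Cq * Q^2 / k"
      using V_bounds(2)[of p "y 0"] unfolding w_def by (simp add: mult_left_mono)
    also have "\<dots> \<le> (c1 * exp (- (k / 2) * t) * (NA * norm (x 0 - xe)))^2 + (c2 * D)^2"
    proof (rule add_mono)
      have ee: "exp (- k * t) = (exp (- (k / 2) * t))^2"
        by (simp add: power2_eq_square exp_add[symmetric])
      have "2 * (exp (- k * t) * (bV * (norm (y 0))^2)) = (2 * bV) * (exp (- (k / 2) * t))^2 * (norm (y 0))^2"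
        unfolding ee by (simp add: algebra_simps)
      also have "\<dots> \<le> c1^2 * (exp (- (k / 2) * t))^2 * (NA * norm (x 0 - xe))^2"
        using c1(2) y0b by (intro mult_mono power_mono) auto
      also have "\<dots> = (c1 * exp (- (k / 2) * t) * (NA * norm (x 0 - xe)))^2" by (simp add: power_mult_distrib)
      finally show "2 * (exp (- k * t) * (bV * (norm (y 0))^2)) \<le> (c1 * exp (- (k / 2) * t) * (NA * norm (x 0 - xe)))^2" .
      have "2 * Cq * Q^2 / k = (2 * Cq * (NT * NB)^2 / k) * D^2" unfolding Q_def by (simp add: power_mult_distrib)
      also have "\<dots> \<le> c2^2 * D^2" using c2(2) by (intro mult_right_mono) auto
      finally show "2 * Cq * Q^2 / k \<le> (c2 * D)^2" by (simp add: power_mult_distrib)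
    qed
    finally have sq: "(norm (y t))^2 \<le> (c1 * exp (- (k / 2) * t) * (NA * norm (x 0 - xe)))^2 + (c2 * D)^2" .
    have p1: "0 \<le> c1 * exp (- (k / 2) * t) * (NA * norm (x 0 - xe))"
      using c1(1) NA(1) by (intro mult_nonneg_nonneg) auto
    have p2: "0 \<le> c2 * D" using c2(1) D0 by simp
    have "norm (y t) \<le> c1 * exp (- (k / 2) * t) * (NA * norm (x 0 - xe)) + c2 * D"
      by (rule sq_le_sum_sq[OF norm_ge_zero p1 p2 sq])
    then have "\<kappa> * norm (y t) \<le> \<kappa> * (c1 * exp (- (k / 2) * t) * (NA * norm (x 0 - xe)) + c2 * D)"
      using \<kappa>(1) by (intro mult_left_mono) auto
    moreover have "norm (x t - xe) \<le> \<kappa> * norm (y t)" unfolding y_def by (rule \<kappa>(2))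
    moreover have "\<kappa> * (c2 * D) \<le> \<gamma> D" unfolding \<gamma>_def using D0 by (simp add: algebra_simps)
    moreover have "\<kappa> * (c1 * exp (- (k / 2) * t) * (NA * norm (x 0 - xe))) = \<beta> (norm (x 0 - xe)) t"
      unfolding \<beta>_def by (simp add: algebra_simps)
    ultimately show "norm (x t - xe) \<le> \<beta> (norm (x 0 - xe)) t + \<gamma> (Sup ((\<lambda>s. norm (u s)) ` {0..}))"
      unfolding D_def[symmetric] by (simp add: algebra_simps)
  qed
qed


end
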